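(* Let $M\ge 1$ and $\omega>0$ be such that $\|C(t)\|\le Me^{\omega|t|}$ for all $t\in\mathbb R$. Then the operators $$\mathcal T(t)=\begin{bmatrix} C(t)|_{\mathbb W} & S(t)\\ AS(t)|_{\mathbb W} & C(t)\end{bmatrix},\qquad t\in\mathbb R,$$ are bounded on $\mathbb W\times\mathbb X$ (normed by $\|(w,x)\|_{\mathbb W\times\mathbb X}=\|w\|_{\mathbb W}+\|x\|$) and $$\|\mathcal T(t)\|_{\mathcal B(\mathbb W\times\mathbb X)}\le M_1e^{\omega|t|}\quad\text{for all }t\in\mathbb R,\qquad M_1:=M\max\Big\{2+\frac{M}{\sinh(\omega/2)},\;1+\omega^{-1}+e^{\omega}\Big\}.$$
   Context: $\mathbb X$ is a complex Banach space with norm $\|\cdot\|$, and $A:\mathrm{dom}(A)\subseteq\mathbb X\to\mathbb X$ is the generator of a strongly continuous cosine family $\{C(t)\}_{t\in\mathbb R}\subset\mathcal B(\mathbb X)$: i.e. $t\mapsto C(t)x$ is continuous for each $x$, $C(0)=I$, $C(t+s)+C(t-s)=2C(t)C(s)$ for all $t,s$, and $A$ is the (closed, densely defined) operator with $\lambda(\lambda^2-A)^{-1}x=\int_0^\infty e^{-\lambda t}C(t)x\,dt$ for all sufficiently large $\lambda$. The associated sine family is $S(t)x=\int_0^tC(s)x\,ds$. The phase space is $\mathbb W=\{x\in\mathbb X: S(\cdot)x\in C([0,1],\mathrm{dom}(A))\}$ (where $\mathrm{dom}(A)$ carries the graph norm), with norm $\|x\|_{\mathbb W}=\|x\|+\sup_{0\le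 s\le 1}\|AS(s)x\|$. *)

theory Defs
  imports "HOL-Analysis.Analysis"
begin

definition cosine_family :: "(real \<Rightarrow> 'a::banach \<Rightarrow> 'a) \<Rightarrow> bool" where
  "cosine_family C \<longleftrightarrow>
     (\<forall>t. bounded_linear (C t)) \<and>
     (\<forall>x. continuous_on UNIV (\<lambda>t. C t x)) \<and>
     C 0 = id \<and>
     (\<forall>t s. \<forall>x. C (t + s) x + C (t - s) x = 2 *\<^sub>R C t (C s x))"

text \<open>\<open>(D, A)\<close> is the generator of \<open>C\<close>: for all sufficiently large \<open>\<lambda>\<close>,
  \<open>\<lambda>\<^sup>2 - A : D \<rightarrow> X\<close> is bijective and
  \<open>\<lambda> (\<lambda>\<^sup>2 - A)\<inverse> x = \<integral>\<^sub>0\<^sup>\<infinity> e\<^sup>-\<^sup>\<lambda>\<^sup>t C(t) x dt\<close>.\<close>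
definition cosine_generator ::
    "(real \<Rightarrow> 'a::banach \<Rightarrow> 'a) \<Rightarrow> 'a set \<Rightarrow> ('a \<Rightarrow> 'a) \<Rightarrow> bool" where
  "cosine_generator C D A \<longleftrightarrow>
     (\<exists>l0. \<forall>l>l0.
        (\<forall>y\<in>D. \<forall>z\<in>D. l\<^sup>2 *\<^sub>R y - A y = l\<^sup>2 *\<^sub>R z - A z \<longrightarrow> y = z) \<and>
        (\<forall>x. \<exists>y\<in>D. l\<^sup>2 *\<^sub>R y - A y = x \<and>
              ((\<lambda>t. exp (- l * t) *\<^sub>R C t x) has_integral (l *\<^sub>R y)) {0..}))"

definition sine_family :: "(real \<Rightarrow> 'a::banach \<Rightarrow> 'a) \<Rightarrow> real \<Rightarrow> 'a \<Rightarrow> 'a" where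
  "sine_family C t x =
     (if 0 \<le> t then integral {0..t} (\<lambda>s. C s x) else - integral {t..0} (\<lambda>s. C s x))"

text \<open>Phase space \<open>W = {x. S(\<cdot>)x \<in> C([0,1], dom A)}\<close>, dom A with the graph norm.\<close>
definition phase_space ::
    "(real \<Rightarrow> 'a::banach \<Rightarrow> 'a) \<Rightarrow> 'a set \<Rightarrow> ('a \<Rightarrow> 'a) \<Rightarrow> 'a set" where
  "phase_space C D A =
     {x. (\<forall>s\<in>{0..1}. sine_family C s x \<in> D) \<and>
         continuous_on {0..1} (\<lambda>s. sine_family C s x) \<and>
         continuous_on {0..1} (\<lambda>s. A (sine_family C s x))}"

definition phase_norm ::
    "(real \<Rightarrow> 'a::banach \<Rightarrow> 'a) \<Rightarrow> ('a \<Rightarrow> 'a) \<Rightarrow> 'a \<Rightarrow> real" where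
  "phase_norm C A x = norm x + (SUP s\<in>{0..1}. norm (A (sine_family C s x)))"

end

theory Submission
  imports Defs
begin

lemma deriv_unique:
  fixes f g :: "real \<Rightarrow> 'a::real_normed_vector"
  assumes "\<And>t. (f has_vector_derivative h t) (at t)"
    and "\<And>t. (g has_vector_derivative h t) (at t)"
    and "f 0 = g 0"
  shows "f t = g t"
proof -
  have "((\<lambda>t. f t - g t) has_derivative (\<lambda>h. 0)) (at x within UNIV)" for x
    using has_vector_derivative_diff[OF assms(1)[of x] assms(2)[of x]]
    by (simp add: has_vector_derivative_def)
  then have "(\<lambda>t. f t - g t) t = (\<lambda>t. f t - g t) 0"
    by (intro has_derivative_zero_unique[where s=UNIV]) auto
  then show ?thesis using assms(3) by simp
qed

lemma oint_deriv:
  fixes f :: "real \<Rightarrow> 'a::banach"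
  assumes "continuous_on UNIV f"
  shows "((\<lambda>t. if 0 \<le> t then integral {0..t} f else - integral {t..0} f) has_vector_derivative f t) (at t)"
proof -
  define a where "a = - \<bar>t\<bar> - 1"
  define b where "b = \<bar>t\<bar> + 1"
  have cab: "continuous_on {a..b} f" using assms continuous_on_subset by blast
  have "((\<lambda>u. integral {a..u} f) has_vector_derivative f t) (at t within {a..b})"
    by (rule integral_has_vector_derivative[OF cab]) (auto simp: a_def b_def)
  moreover have "t \<in> interior {a..b}" by (auto simp: a_def b_def)
  ultimately have "((\<lambda>u. integral {a..u} f) has_vector_derivative f t) (at t)"
    by (metis at_within_interior)
  then have d: "((\<lambda>u. integral {a..u} f - integral {a..0} f) has_vector_derivative f t) (at t)"
    by (rule derivative_eq_intros) auto
  show ?thesis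
  proof (rule has_vector_derivative_transform_within_open[OF d, of "{a<..<b}"])
    show "open {a<..<b}" by simp
    show "t \<in> {a<..<b}" by (auto simp: a_def b_def)
    fix y assume y: "y \<in> {a<..<b}"
    have a0: "a \<le> 0" by (simp add: a_def)
    have int: "f integrable_on {a..max y 0}"
      by (rule integrable_continuous_real) (rule continuous_on_subset[OF assms], simp)
    show "integral {a..y} f - integral {a..0} f = (if 0 \<le> y then integral {0..y} f else - integral {y..0} f)"
    proof (cases "0 \<le> y")
      case True
      have int': "f integrable_on {a..y}" using int True by (simp add: max_def)
      have "integral {a..0} f + integral {0..y} f = integral {a..y} f"
        using Henstock_Kurzweil_Integration.integral_combine[OF a0 True int'] .
      then show ?thesis using True by (simp add: algebra_simps)
    next
      case False
      have int': "f integrable_on {a..0}" using int False by (simp add: max_def)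
      have ay: "a \<le> y" using y by simp
      have "integral {a..y} f + integral {y..0} f = integral {a..0} f"
        using Henstock_Kurzweil_Integration.integral_combine[OF ay _ int'] False by simp
      then show ?thesis using False by (simp add: algebra_simps)
    qed
  qed
qed

lemma tail_lim:
  fixes f :: "real \<Rightarrow> 'a::banach"
  assumes "(f has_integral I) {0..}"
  shows "((\<lambda>T. integral {0..T} f) \<longlongrightarrow> I) at_top"
proof (rule tendstoI)
  fix e :: real assume e: "e > 0"
  have nc: "\<not> (\<exists>a b. {0::real..} = cbox a b)"
  proof
    assume "\<exists>a b. {0::real..} = cbox a b"
    then obtain a b :: real where ab: "{0..} = cbox a b" by blast
    have "max b 0 + 1 \<in> {0::real..}" by simp
    then have "max b 0 + 1 \<in> cbox a b" using ab by simp
    then show False by (simp add: max_def split: if_splits)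
  qed
  obtain B where B: "B > 0"
    and Bp: "\<forall>a b. ball 0 B \<subseteq> cbox a b \<longrightarrow>
      (\<exists>z. ((\<lambda>x. if x \<in> {0..} then f x else 0) has_integral z) (cbox a b) \<and> norm (z - I) < e)"
    using has_integral_altD[OF assms nc e] by blast
  show "\<forall>\<^sub>F T in at_top. dist (integral {0..T} f) I < e"
  proof (rule eventually_at_top_linorderI[of B])
    fix T assume T: "B \<le> T"
    have "ball 0 B \<subseteq> cbox (- T) T" using T by (auto simp: dist_real_def)
    then obtain z where z: "((\<lambda>x. if x \<in> {0..} then f x else 0) has_integral z) (cbox (- T) T)"
      and zn: "norm (z - I) < e" using Bp by blast
    have "z = integral (cbox (- T) T) (\<lambda>x. if x \<in> {0..} then f x else 0)"
      using z by (simp add: integral_unique)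
    also have "\<dots> = integral ({0..} \<inter> cbox (- T) T) f"
      by (rule integral_restrict_Int)
    also have "{0..} \<inter> cbox (- T) T = {0..T}" using T B by auto
    finally show "dist (integral {0..T} f) I < e" using zn by (simp add: dist_norm)
  qed
qed

lemma exp_decay: "c > 0 \<Longrightarrow> ((\<lambda>T::real. exp (- c * T)) \<longlongrightarrow> 0) at_top"
proof -
  assume c: "c > 0"
  have "LIM T at_top. (- c) * T :> at_bot"
    by (rule filterlim_tendsto_neg_mult_at_bot[OF tendsto_const _ filterlim_ident]) (use c in simp)
  then show ?thesis by (rule filterlim_compose[OF exp_at_bot])
qed

locale cf =
  fixes C :: "real \<Rightarrow> 'a::banach \<Rightarrow> 'a" and D :: "'a set" and A :: "'a \<Rightarrow> 'a"
    and M \<omega> :: real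
  assumes cos: "cosine_family C"
    and gen: "cosine_generator C D A"
    and M1: "M \<ge> 1" and om: "\<omega> > 0"
    and bnd: "\<forall>t. onorm (C t) \<le> M * exp (\<omega> * \<bar>t\<bar>)"
begin

abbreviation "S \<equiv> sine_family C"

lemma Cbl: "bounded_linear (C t)" using cos by (simp add: cosine_family_def)

lemma C_add: "C t (x + y) = C t x + C t y" proof - interpret bounded_linear "C t" by (rule Cbl) show ?thesis by (rule add) qed
lemma C_diff: "C t (x - y) = C t x - C t y" proof - interpret bounded_linear "C t" by (rule Cbl) show ?thesis by (rule diff) qed
lemma C_scale: "C t (c *\<^sub>R x) = c *\<^sub>R C t x" proof - interpret bounded_linear "C t" by (rule Cbl) show ?thesis by (rule scaleR) qed
lemma C_zero: "C t 0 = 0" proof - interpret bounded_linear "C t" by (rule Cbl) show ?thesis by (rule zero) qed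

lemma C_minus: "C t (- x) = - C t x" by (metis C_diff C_zero diff_0)

lemma C_norm: "norm (C t x) \<le> M * exp (\<omega> * \<bar>t\<bar>) * norm x"
proof -
  have "norm (C t x) \<le> onorm (C t) * norm x" by (rule onorm[OF Cbl])
  also have "\<dots> \<le> M * exp (\<omega> * \<bar>t\<bar>) * norm x"
    using bnd by (intro mult_right_mono) auto
  finally show ?thesis .
qed

lemma C0: "C 0 x = x" using cos by (simp add: cosine_family_def)

lemma dal: "C (t + s) x + C (t - s) x = 2 *\<^sub>R C t (C s x)"
  using cos by (simp add: cosine_family_def)

lemma C_even: "C (- t) x = C t x"
proof -
  have "C (0 + t) x + C (0 - t) x = 2 *\<^sub>R C 0 (C t x)" by (rule dal)
  then have "C t x + C (- t) x = 2 *\<^sub>R C t x" by (simp add: C0)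
  then show ?thesis by (simp add: scaleR_2)
qed

lemma C_comm: "C t (C s x) = C s (C t x)"
proof -
  have "2 *\<^sub>R C t (C s x) = C (t + s) x + C (t - s) x" by (simp add: dal)
  also have "\<dots> = C (s + t) x + C (s - t) x"
    using C_even[of "s - t" x] by (simp add: add.commute)
  also have "\<dots> = 2 *\<^sub>R C s (C t x)" by (simp add: dal)
  finally show ?thesis by simp
qed

lemma C_cont: "continuous_on UNIV (\<lambda>t. C t x)"
  using cos by (simp add: cosine_family_def)

lemma C_contc[continuous_intros]: "continuous_on T f \<Longrightarrow> continuous_on T (\<lambda>s. C (f s) x)"
  using continuous_on_compose2[OF C_cont] by blast

lemma S_deriv: "((\<lambda>t. S t x) has_vector_derivative C t x) (at t)"
  unfolding sine_family_def by (rule oint_deriv[OF C_cont])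

lemma S_deriv'[derivative_intros]:
  "(f has_real_derivative f') (at t) \<Longrightarrow> ((\<lambda>t. S (f t) x) has_vector_derivative f' *\<^sub>R C (f t) x) (at t)"
  using vector_diff_chain_at[OF _ S_deriv, of f f' t] by (simp add: has_real_derivative_iff_has_vector_derivative comp_def)

lemma S0: "S 0 x = 0" by (simp add: sine_family_def)

lemma S_cont: "continuous_on T (\<lambda>t. S t x)"
  by (intro continuous_at_imp_continuous_on ballI has_vector_derivative_continuous[OF S_deriv])


lemma C_vd[derivative_intros]:
  "(g has_vector_derivative g') F \<Longrightarrow> ((\<lambda>t. C s (g t)) has_vector_derivative C s g') F"
  by (rule bounded_linear.has_vector_derivative[OF Cbl])

declare S_deriv[derivative_intros]

lemma S_odd: "S (- t) x = - S t x"
proof -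
  have "(\<lambda>t. S (- t) x) t = (\<lambda>t. - S t x) t"
  proof (rule deriv_unique[where f="\<lambda>t. S (- t) x" and g="\<lambda>t. - S t x" and h="\<lambda>t. - C t x"])
    show "((\<lambda>t. S (- t) x) has_vector_derivative - C t x) (at t)" for t
      by (rule has_vector_derivative_eq_rhs, (auto intro!: derivative_eq_intros)[1]; auto simp: C_even)
    show "((\<lambda>t. - S t x) has_vector_derivative - C t x) (at t)" for t
      by (rule has_vector_derivative_eq_rhs, (auto intro!: derivative_eq_intros)[1]; auto)
  qed (simp add: S0)
  then show ?thesis by simp
qed

lemma S_add: "S t (x + y) = S t x + S t y"
proof -
  have "(\<lambda>t. S t (x + y)) t = (\<lambda>t. S t x + S t y) t"
  proof (rule deriv_unique[where f="\<lambda>t. S t (x + y)" and g="\<lambda>t. S t x + S t y" and h="\<lambda>t. C t x + C t y"])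
    show "((\<lambda>t. S t (x + y)) has_vector_derivative C t x + C t y) (at t)" for t
      by (rule has_vector_derivative_eq_rhs, (auto intro!: derivative_eq_intros)[1]; auto simp: C_add)
    show "((\<lambda>t. S t x + S t y) has_vector_derivative C t x + C t y) (at t)" for t
      by (rule has_vector_derivative_eq_rhs, (auto intro!: derivative_eq_intros)[1]; auto)
  qed (simp add: S0)
  then show ?thesis by simp
qed

lemma S_scale: "S t (c *\<^sub>R x) = c *\<^sub>R S t x"
proof -
  have "(\<lambda>t. S t (c *\<^sub>R x)) t = (\<lambda>t. c *\<^sub>R S t x) t"
  proof (rule deriv_unique[where f="\<lambda>t. S t (c *\<^sub>R x)" and g="\<lambda>t. c *\<^sub>R S t x" and h="\<lambda>t. c *\<^sub>R C t x"])
    show "((\<lambda>t. S t (c *\<^sub>R x)) has_vector_derivative c *\<^sub>R C t x) (at t)" for t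
      by (rule has_vector_derivative_eq_rhs, (auto intro!: derivative_eq_intros)[1]; auto simp: C_scale)
    show "((\<lambda>t. c *\<^sub>R S t x) has_vector_derivative c *\<^sub>R C t x) (at t)" for t
      by (rule has_vector_derivative_eq_rhs, (auto intro!: derivative_eq_intros)[1]; auto)
  qed (simp add: S0)
  then show ?thesis by simp
qed

lemma S_minus: "S t (- x) = - S t x"
  using S_scale[of t "-1" x] by simp

lemma S_diff: "S t (x - y) = S t x - S t y"
  using S_add[of t x "- y"] S_minus[of t y] by simp

lemma CS: "C s (S t x) = (1/2) *\<^sub>R (S (t + s) x + S (t - s) x)"
proof -
  have "(\<lambda>t. C s (S t x)) t = (\<lambda>t. (1/2) *\<^sub>R (S (t + s) x + S (t - s) x)) t"
  proof (rule deriv_unique[where f="\<lambda>t. C s (S t x)" and g="\<lambda>t. (1/2) *\<^sub>R (S (t + s) x + S (t - s) x)" and h="\<lambda>t. C s (C t x)"])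
    show "((\<lambda>t. C s (S t x)) has_vector_derivative C s (C t x)) (at t)" for t
      by (rule has_vector_derivative_eq_rhs, (auto intro!: derivative_eq_intros)[1]; auto)
    show "((\<lambda>t. (1/2) *\<^sub>R (S (t + s) x + S (t - s) x)) has_vector_derivative C s (C t x)) (at t)" for t
      by (rule has_vector_derivative_eq_rhs, (auto intro!: derivative_eq_intros)[1])
        (use dal[of t s x] in \<open>auto simp: C_comm algebra_simps\<close>)
  qed (simp add: S0 C_zero S_odd)
  then show ?thesis by simp
qed

lemma SC: "S t (C s x) = C s (S t x)"
proof -
  have "(\<lambda>t. S t (C s x)) t = (\<lambda>t. C s (S t x)) t"
  proof (rule deriv_unique[where f="\<lambda>t. S t (C s x)" and g="\<lambda>t. C s (S t x)" and h="\<lambda>t. C s (C t x)"])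
    show "((\<lambda>t. S t (C s x)) has_vector_derivative C s (C t x)) (at t)" for t
      by (rule has_vector_derivative_eq_rhs, (auto intro!: derivative_eq_intros)[1]; auto simp: C_comm)
    show "((\<lambda>t. C s (S t x)) has_vector_derivative C s (C t x)) (at t)" for t
      by (rule has_vector_derivative_eq_rhs, (auto intro!: derivative_eq_intros)[1]; auto)
  qed (simp add: S0 C_zero)
  then show ?thesis by simp
qed

lemma S_rec: "S (t + h) x - S (t - h) x = 2 *\<^sub>R C t (S h x)"
proof -
  have "C t (S h x) = (1/2) *\<^sub>R (S (t + h) x - S (t - h) x)"
    using CS[of t h x] S_odd[of "t - h" x] by (simp add: add.commute)
  then show ?thesis by simp
qed


lemma S_norm_pos:
  assumes t: "0 \<le> t"
  shows "norm (S t x) \<le> M / \<omega> * exp (\<omega> * t) * norm x"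
proof -
  let ?G = "\<lambda>s. M * norm x * exp (\<omega> * s) / \<omega>"
  let ?g = "\<lambda>s. M * norm x * exp (\<omega> * s)"
  have d: "(?G has_real_derivative ?g s) (at s within {0..t})" for s
    using om by (auto intro!: derivative_eq_intros)
  have gi: "(?g has_integral (?G t - ?G 0)) {0..t}"
    by (rule fundamental_theorem_of_calculus[OF t])
      (use d in \<open>auto simp: has_real_derivative_iff_has_vector_derivative\<close>)
  have "norm (S t x) = norm (integral {0..t} (\<lambda>s. C s x))"
    using t by (simp add: sine_family_def)
  also have "\<dots> \<le> integral {0..t} ?g"
  proof (rule integral_norm_bound_integral)
    show "(\<lambda>s. C s x) integrable_on {0..t}"
      by (rule integrable_continuous_real) (rule continuous_on_subset[OF C_cont], simp)
    show "?g integrable_on {0..t}" using gi by blast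
    show "norm (C s x) \<le> ?g s" if "s \<in> {0..t}" for s
      using C_norm[of s x] that by (simp add: mult_ac)
  qed
  also have "\<dots> = ?G t - ?G 0" using gi by (rule integral_unique)
  also have "\<dots> \<le> ?G t" using M1 om by simp
  also have "\<dots> = M / \<omega> * exp (\<omega> * t) * norm x" by simp
  finally show ?thesis .
qed

lemma S_norm: "norm (S t x) \<le> M / \<omega> * exp (\<omega> * \<bar>t\<bar>) * norm x"
proof (cases "0 \<le> t")
  case True then show ?thesis using S_norm_pos[of t x] by simp
next
  case False
  then have "norm (S t x) = norm (S (- t) x)" using S_odd[of t x] by simp
  then show ?thesis using S_norm_pos[of "- t" x] False by simp
qed


definition "Pl l \<longleftrightarrow> l > \<omega> \<and> (\<forall>y\<in>D. \<forall>z\<in>D. l\<^sup>2 *\<^sub>R y - A y = l\<^sup>2 *\<^sub>R z - A z \<longrightarrow> y = z) \<and>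
   (\<forall>x. \<exists>y\<in>D. l\<^sup>2 *\<^sub>R y - A y = x \<and> ((\<lambda>t. exp (- l * t) *\<^sub>R C t x) has_integral (l *\<^sub>R y)) {0..})"

lemma ex_lam: "\<exists>l. Pl l"
proof -
  obtain l0 where H: "\<forall>l>l0.
        (\<forall>y\<in>D. \<forall>z\<in>D. l\<^sup>2 *\<^sub>R y - A y = l\<^sup>2 *\<^sub>R z - A z \<longrightarrow> y = z) \<and>
        (\<forall>x. \<exists>y\<in>D. l\<^sup>2 *\<^sub>R y - A y = x \<and>
              ((\<lambda>t. exp (- l * t) *\<^sub>R C t x) has_integral (l *\<^sub>R y)) {0..})"
    using gen unfolding cosine_generator_def by blast
  have "Pl (\<bar>l0\<bar> + \<omega> + 1)"
    unfolding Pl_def using H[rule_format, of "\<bar>l0\<bar> + \<omega> + 1"] om by auto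
  then show ?thesis by blast
qed

definition "lam = (SOME l. Pl l)"

lemma lam: "Pl lam" unfolding lam_def using ex_lam by (rule someI_ex)

lemma lam_gt: "lam > \<omega>" using lam by (simp add: Pl_def)
lemma lam_pos: "lam > 0" using lam_gt om by simp

definition "R x = (1 / lam) *\<^sub>R integral {0..} (\<lambda>t. exp (- lam * t) *\<^sub>R C t x)"

lemma R_props: "R x \<in> D \<and> lam\<^sup>2 *\<^sub>R R x - A (R x) = x \<and>
   ((\<lambda>t. exp (- lam * t) *\<^sub>R C t x) has_integral (lam *\<^sub>R R x)) {0..}"
proof -
  obtain y where y: "y \<in> D" "lam\<^sup>2 *\<^sub>R y - A y = x"
    and hi: "((\<lambda>t. exp (- lam * t) *\<^sub>R C t x) has_integral (lam *\<^sub>R y)) {0..}"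
    using lam unfolding Pl_def by blast
  have "R x = y" using integral_unique[OF hi] lam_pos by (simp add: R_def)
  then show ?thesis using y hi by simp
qed

lemma Lap: "((\<lambda>t. exp (- lam * t) *\<^sub>R C t x) has_integral (lam *\<^sub>R R x)) {0..}"
  using R_props by blast

lemma R_D: "R x \<in> D" using R_props by blast

lemma A_R: "A (R x) = lam\<^sup>2 *\<^sub>R R x - x" using R_props[of x] by (simp add: algebra_simps)

lemma D_R: assumes "y \<in> D" shows "y = R (lam\<^sup>2 *\<^sub>R y - A y)"
proof -
  let ?x = "lam\<^sup>2 *\<^sub>R y - A y"
  have "lam\<^sup>2 *\<^sub>R R ?x - A (R ?x) = ?x" using R_props by blast
  then show ?thesis using lam assms R_D unfolding Pl_def by metis
qed

lemma Lap_unique: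
  assumes "((\<lambda>t. exp (- lam * t) *\<^sub>R C t x) has_integral (lam *\<^sub>R y)) {0..}"
  shows "R x = y"
  using has_integral_unique[OF Lap assms] lam_pos by simp

lemma R_add: "R (x + y) = R x + R y"
  by (rule Lap_unique) (use has_integral_add[OF Lap[of x] Lap[of y]] in \<open>simp add: C_add algebra_simps\<close>)

lemma R_scale: "R (c *\<^sub>R x) = c *\<^sub>R R x"
  by (rule Lap_unique) (use has_integral_cmul[OF Lap[of x], of c] in \<open>simp add: C_scale algebra_simps\<close>)

lemma R_diff: "R (x - y) = R x - R y"
  using R_add[of x "- y"] R_scale[of "-1" y] by simp

lemma D_add: "y1 \<in> D \<Longrightarrow> y2 \<in> D \<Longrightarrow> y1 + y2 \<in> D \<and> A (y1 + y2) = A y1 + A y2"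
proof -
  assume y: "y1 \<in> D" "y2 \<in> D"
  obtain x1 where x1: "y1 = R x1" using D_R[OF y(1)] by blast
  obtain x2 where x2: "y2 = R x2" using D_R[OF y(2)] by blast
  have e: "y1 + y2 = R (x1 + x2)" using x1 x2 R_add by simp
  show ?thesis unfolding e unfolding x1 x2 A_R by (intro conjI R_D) (simp add: R_add algebra_simps)
qed

lemma D_scale: "y \<in> D \<Longrightarrow> c *\<^sub>R y \<in> D \<and> A (c *\<^sub>R y) = c *\<^sub>R A y"
proof -
  assume y: "y \<in> D"
  obtain x where x: "y = R x" using D_R[OF y] by blast
  have e: "c *\<^sub>R y = R (c *\<^sub>R x)" using x R_scale by simp
  show ?thesis unfolding e unfolding x A_R by (intro conjI R_D) (simp add: R_scale algebra_simps)
qed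

lemma D_diff: "y1 \<in> D \<Longrightarrow> y2 \<in> D \<Longrightarrow> y1 - y2 \<in> D \<and> A (y1 - y2) = A y1 - A y2"
  using D_add[of y1 "(-1) *\<^sub>R y2"] D_scale[of y2 "-1"] by simp

lemma CR: "C s (R x) = R (C s x)"
proof -
  have "((C s \<circ> (\<lambda>t. exp (- lam * t) *\<^sub>R C t x)) has_integral C s (lam *\<^sub>R R x)) {0..}"
    by (rule has_integral_linear[OF Lap Cbl])
  then have "((\<lambda>t. exp (- lam * t) *\<^sub>R C t (C s x)) has_integral (lam *\<^sub>R C s (R x))) {0..}"
    by (simp add: comp_def C_scale C_comm)
  then show ?thesis by (rule Lap_unique[symmetric])
qed

lemma D_C: "y \<in> D \<Longrightarrow> C s y \<in> D \<and> A (C s y) = C s (A y)"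
proof -
  assume y: "y \<in> D"
  obtain x where x: "y = R x" using D_R[OF y] by blast
  show ?thesis using x by (simp add: CR R_D A_R C_diff C_scale)
qed


lemma KEY:
  assumes d1: "\<And>s. ((\<lambda>s. C s w) has_vector_derivative p s) (at s)"
    and d2: "\<And>s. (p has_vector_derivative C s z) (at s)"
    and p0: "p 0 = 0"
    and pb: "\<And>s. s \<ge> 0 \<Longrightarrow> norm (p s) \<le> K * exp (\<omega> * s)"
  shows "w \<in> D \<and> A w = z"
proof -
  define \<Phi> where "\<Phi> s = exp (- lam * s) *\<^sub>R (p s + lam *\<^sub>R C s w)" for s
  define \<phi> where "\<phi> s = exp (- lam * s) *\<^sub>R C s z - lam\<^sup>2 *\<^sub>R (exp (- lam * s) *\<^sub>R C s w)" for s
  have d\<Phi>: "(\<Phi> has_vector_derivative \<phi> s) (at s)" for s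
    unfolding \<Phi>_def[abs_def] \<phi>_def
    by (rule has_vector_derivative_eq_rhs, (auto intro!: derivative_eq_intros d1 d2)[1];
        simp add: algebra_simps power2_eq_square)
  have hi: "(\<phi> has_integral (lam *\<^sub>R R z - lam\<^sup>2 *\<^sub>R (lam *\<^sub>R R w))) {0..}"
    unfolding \<phi>_def[abs_def]
    by (rule has_integral_diff[OF Lap[of z] has_integral_cmul[OF Lap[of w]]])
  have lim1: "((\<lambda>T. integral {0..T} \<phi>) \<longlongrightarrow> lam *\<^sub>R R z - lam\<^sup>2 *\<^sub>R (lam *\<^sub>R R w)) at_top"
    by (rule tail_lim[OF hi])
  have ev: "eventually (\<lambda>T. integral {0..T} \<phi> = \<Phi> T - \<Phi> 0) at_top"
  proof (rule eventually_at_top_linorderI[of 0])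
    fix T :: real assume T: "0 \<le> T"
    have "(\<phi> has_integral (\<Phi> T - \<Phi> 0)) {0..T}"
      by (rule fundamental_theorem_of_calculus[OF T]) (auto intro: has_vector_derivative_at_within[OF d\<Phi>])
    then show "integral {0..T} \<phi> = \<Phi> T - \<Phi> 0" by (rule integral_unique)
  qed
  have \<Phi>lim: "(\<Phi> \<longlongrightarrow> 0) at_top"
  proof (rule Lim_null_comparison)
    let ?g = "\<lambda>T. (K + lam * M * norm w) * exp (- (lam - \<omega>) * T)"
    show "((\<lambda>T. (K + lam * M * norm w) * exp (- (lam - \<omega>) * T)) \<longlongrightarrow> 0) at_top"
      using tendsto_mult[OF tendsto_const exp_decay, of "lam - \<omega>" "K + lam * M * norm w"] lam_gt
      by simp
    show "\<forall>\<^sub>F T in at_top. norm (\<Phi> T) \<le> ?g T"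
    proof (rule eventually_at_top_linorderI[of 0])
      fix T :: real assume T: "0 \<le> T"
      have "norm (\<Phi> T) = exp (- lam * T) * norm (p T + lam *\<^sub>R C T w)"
        by (simp add: \<Phi>_def)
      also have "\<dots> \<le> exp (- lam * T) * (K * exp (\<omega> * T) + lam * (M * exp (\<omega> * T) * norm w))"
      proof (rule mult_left_mono)
        have "norm (p T + lam *\<^sub>R C T w) \<le> norm (p T) + lam * norm (C T w)"
          using norm_triangle_ineq[of "p T" "lam *\<^sub>R C T w"] lam_pos by simp
        also have "\<dots> \<le> K * exp (\<omega> * T) + lam * (M * exp (\<omega> * T) * norm w)"
          using pb[OF T] C_norm[of T w] T lam_pos
          by (intro add_mono mult_left_mono) auto
        finally show "norm (p T + lam *\<^sub>R C T w) \<le> K * exp (\<omega> * T) + lam * (M * exp (\<omega> * T) * norm w)" .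
      qed simp
      also have "\<dots> = ?g T"
        by (simp add: algebra_simps exp_add[symmetric])
      finally show "norm (\<Phi> T) \<le> ?g T" .
    qed
  qed
  have lim2: "((\<lambda>T. integral {0..T} \<phi>) \<longlongrightarrow> 0 - \<Phi> 0) at_top"
    by (rule Lim_transform_eventually[OF tendsto_diff[OF \<Phi>lim tendsto_const]])
      (use ev in \<open>simp add: eventually_mono\<close>)
  have "lam *\<^sub>R R z - lam\<^sup>2 *\<^sub>R (lam *\<^sub>R R w) = 0 - \<Phi> 0"
    using tendsto_unique[OF _ lim1 lim2] by simp
  also have "\<dots> = - (lam *\<^sub>R w)" by (simp add: \<Phi>_def p0 C0)
  finally have "lam *\<^sub>R (R z - lam\<^sup>2 *\<^sub>R R w) = lam *\<^sub>R (- w)"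
    by (simp add: algebra_simps)
  then have "R z - lam\<^sup>2 *\<^sub>R R w = - w" using lam_pos scaleR_cancel_left by (metis less_irrefl)
  then have wR: "w = R (lam\<^sup>2 *\<^sub>R w - z)"
    by (simp add: R_diff R_scale algebra_simps)
  have "A w = lam\<^sup>2 *\<^sub>R R (lam\<^sup>2 *\<^sub>R w - z) - (lam\<^sup>2 *\<^sub>R w - z)"
    using wR A_R by metis
  also have "\<dots> = z" using wR by simp
  finally show ?thesis using R_D wR by metis
qed


definition "V u x = (if 0 \<le> u then integral {0..u} (\<lambda>r. S r x) else - integral {u..0} (\<lambda>r. S r x))"

lemma V_deriv[derivative_intros]: "((\<lambda>u. V u x) has_vector_derivative S u x) (at u)"
  unfolding V_def by (rule oint_deriv[OF S_cont])

lemma V_deriv'[derivative_intros]: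
  "(f has_real_derivative f') (at t) \<Longrightarrow> ((\<lambda>t. V (f t) x) has_vector_derivative f' *\<^sub>R S (f t) x) (at t)"
  using vector_diff_chain_at[OF _ V_deriv, of f f' t] by (simp add: has_real_derivative_iff_has_vector_derivative comp_def)

lemma V0: "V 0 x = 0" by (simp add: V_def)

lemma CV: "C s (V u x) = (1/2) *\<^sub>R (V (s + u) x + V (s - u) x) - V s x"
proof -
  have "(\<lambda>u. C s (V u x)) u = (\<lambda>u. (1/2) *\<^sub>R (V (s + u) x + V (s - u) x) - V s x) u"
  proof (rule deriv_unique[where f="\<lambda>u. C s (V u x)" and g="\<lambda>u. (1/2) *\<^sub>R (V (s + u) x + V (s - u) x) - V s x" and h="\<lambda>u. C s (S u x)"])
    show "((\<lambda>u. C s (V u x)) has_vector_derivative C s (S u x)) (at u)" for u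
      by (rule has_vector_derivative_eq_rhs, (auto intro!: derivative_eq_intros)[1]; auto)
    show "((\<lambda>u. (1/2) *\<^sub>R (V (s + u) x + V (s - u) x) - V s x) has_vector_derivative C s (S u x)) (at u)" for u
      by (rule has_vector_derivative_eq_rhs, (auto intro!: derivative_eq_intros)[1])
        (use CS[of s u x] S_odd[of "s - u" x] in \<open>auto simp: algebra_simps\<close>)
  qed (simp add: V0 C_zero)
  then show ?thesis by simp
qed

lemma G: "V u x \<in> D \<and> A (V u x) = C u x - x"
proof (rule KEY[where p="\<lambda>s. (1/2) *\<^sub>R (S (s + u) x + S (s - u) x) - S s x"
      and K="M / \<omega> * norm x * (exp (\<omega> * \<bar>u\<bar>) + 1)"])
  show "((\<lambda>s. C s (V u x)) has_vector_derivative (1/2) *\<^sub>R (S (s + u) x + S (s - u) x) - S s x) (at s)" for s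
    unfolding CV by (rule has_vector_derivative_eq_rhs, (auto intro!: derivative_eq_intros)[1]; auto)
  show "((\<lambda>s. (1/2) *\<^sub>R (S (s + u) x + S (s - u) x) - S s x) has_vector_derivative C s (C u x - x)) (at s)" for s
    by (rule has_vector_derivative_eq_rhs, (auto intro!: derivative_eq_intros)[1])
      (use dal[of s u x] in \<open>auto simp: C_diff algebra_simps\<close>)
  show "(1/2) *\<^sub>R (S (0 + u) x + S (0 - u) x) - S 0 x = 0"
    by (simp add: S0 S_odd)
  show "norm ((1/2) *\<^sub>R (S (s + u) x + S (s - u) x) - S s x) \<le> M / \<omega> * norm x * (exp (\<omega> * \<bar>u\<bar>) + 1) * exp (\<omega> * s)"
    if s: "0 \<le> s" for s
  proof -
    have MO: "M / \<omega> \<ge> 0" using M1 om by simp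
    have e1: "exp (\<omega> * \<bar>s + u\<bar>) \<le> exp (\<omega> * s) * exp (\<omega> * \<bar>u\<bar>)"
      using s om by (simp add: exp_add[symmetric] distrib_left[symmetric] mult_left_mono abs_triangle_ineq[of s u, simplified abs_of_nonneg[OF s]])
    have e2: "exp (\<omega> * \<bar>s - u\<bar>) \<le> exp (\<omega> * s) * exp (\<omega> * \<bar>u\<bar>)"
      using s om abs_triangle_ineq4[of s u] by (simp add: exp_add[symmetric] distrib_left[symmetric] mult_left_mono)
    have "norm ((1/2) *\<^sub>R (S (s + u) x + S (s - u) x) - S s x)
        \<le> (1/2) * (norm (S (s + u) x) + norm (S (s - u) x)) + norm (S s x)"
      by (rule order_trans[OF norm_triangle_ineq4]) (simp add: norm_triangle_ineq)
    also have "\<dots> \<le> (1/2) * (M / \<omega> * exp (\<omega> * \<bar>s + u\<bar>) * norm x + M / \<omega> * exp (\<omega> * \<bar>s - u\<bar>) * norm x)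
         + M / \<omega> * exp (\<omega> * \<bar>s\<bar>) * norm x"
      by (intro add_mono mult_left_mono S_norm) auto
    also have "\<dots> \<le> (1/2) * (M / \<omega> * (exp (\<omega> * s) * exp (\<omega> * \<bar>u\<bar>)) * norm x + M / \<omega> * (exp (\<omega> * s) * exp (\<omega> * \<bar>u\<bar>)) * norm x)
         + M / \<omega> * exp (\<omega> * s) * norm x"
      using s e1 e2 MO by (intro add_mono mult_left_mono mult_right_mono) auto
    also have "\<dots> = M / \<omega> * norm x * (exp (\<omega> * \<bar>u\<bar>) + 1) * exp (\<omega> * s)"
      by (simp add: algebra_simps)
    finally show ?thesis .
  qed
qed

lemma SS: "S s (S t x) = (1/2) *\<^sub>R (V (t + s) x - V (t - s) x)"
proof -
  have "(\<lambda>s. S s (S t x)) s = (\<lambda>s. (1/2) *\<^sub>R (V (t + s) x - V (t - s) x)) s"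
  proof (rule deriv_unique[where f="\<lambda>s. S s (S t x)" and g="\<lambda>s. (1/2) *\<^sub>R (V (t + s) x - V (t - s) x)" and h="\<lambda>s. C s (S t x)"])
    show "((\<lambda>s. S s (S t x)) has_vector_derivative C s (S t x)) (at s)" for s
      by (rule S_deriv)
    show "((\<lambda>s. (1/2) *\<^sub>R (V (t + s) x - V (t - s) x)) has_vector_derivative C s (S t x)) (at s)" for s
      by (rule has_vector_derivative_eq_rhs, (auto intro!: derivative_eq_intros)[1])
        (use CS[of s t x] in \<open>auto simp: algebra_simps\<close>)
  qed (simp add: S0)
  then show ?thesis by simp
qed

lemma SS_D: "S s (S t x) \<in> D \<and> A (S s (S t x)) = (1/2) *\<^sub>R (C (t + s) x - C (t - s) x)"
proof -
  have a: "V (t + s) x - V (t - s) x \<in> D \<and> A (V (t + s) x - V (t - s) x) = C (t + s) x - C (t - s) x"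
    using D_diff[OF conjunct1[OF G] conjunct1[OF G], of "t + s" x "t - s" x] G[of "t + s" x] G[of "t - s" x]
    by simp
  show ?thesis unfolding SS using D_scale[OF conjunct1[OF a], of "1/2"] a by simp
qed


lemma sinh_id:
  fixes t :: real
  shows "M / sinh (\<omega> / 2) * exp (\<omega> * (t - 1)) + 2 * M * exp (\<omega> * (t - 1/2)) = M / sinh (\<omega> / 2) * exp (\<omega> * t)"
proof -
  define q where "q = exp (\<omega> / 2)"
  define E where "E = exp (\<omega> * t)"
  have q1: "q > 1" using om by (simp add: q_def)
  have sh: "sinh (\<omega> / 2) = (q - 1 / q) / 2" by (simp add: sinh_def q_def exp_minus field_simps)
  have e1: "exp (\<omega> * (t - 1)) = E / q^2"
    by (simp add: E_def q_def right_diff_distrib exp_diff power2_eq_square exp_add[symmetric])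
  have e2: "exp (\<omega> * (t - 1/2)) = E / q"
    by (simp add: E_def q_def right_diff_distrib exp_diff)
  have "q^2 - 1 \<noteq> 0" using q1 by (simp add: power2_eq_square) (smt (verit) mult_le_cancel_right1)
  then show ?thesis unfolding sh e1 e2 E_def[symmetric] using q1
    by (simp add: field_simps power2_eq_square)
qed

definition "PS w = (SUP s\<in>{0..1}. norm (A (S s w)))"

lemma PS_props:
  assumes w: "w \<in> phase_space C D A"
  shows "\<And>s. s \<in> {0..1} \<Longrightarrow> norm (A (S s w)) \<le> PS w" and "PS w \<ge> 0"
proof -
  have c: "continuous_on {0..1} (\<lambda>s. norm (A (S s w)))"
    using w by (auto simp: phase_space_def intro: continuous_on_norm)
  have "bdd_above ((\<lambda>s. norm (A (S s w))) ` {0..1})"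
    by (rule bounded_imp_bdd_above, rule compact_imp_bounded, rule compact_continuous_image[OF c]) simp
  then show le: "\<And>s. s \<in> {0..1} \<Longrightarrow> norm (A (S s w)) \<le> PS w"
    unfolding PS_def by (rule cSUP_upper2) auto
  show "PS w \<ge> 0" using le[of 0] by (meson atLeastAtMost_iff norm_ge_zero order_trans zero_le_one order_refl)
qed

lemma Sw_pos:
  assumes w: "w \<in> phase_space C D A"
  shows "\<forall>t\<in>{0..real n + 1}. S t w \<in> D \<and> norm (A (S t w)) \<le> PS w * (1 + M / sinh (\<omega> / 2) * (exp (\<omega> * t) - 1))"
proof (induction n)
  have sh: "sinh (\<omega> / 2) > 0" using om by simp
  have cpos: "M / sinh (\<omega> / 2) \<ge> 0" using sh M1 by simp
  {
    fix t :: real assume t: "t \<in> {0..1}"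
    have "S t w \<in> D" using w t by (simp add: phase_space_def)
    moreover have "norm (A (S t w)) \<le> PS w * (1 + M / sinh (\<omega> / 2) * (exp (\<omega> * t) - 1))"
    proof -
      have "0 \<le> exp (\<omega> * t) - 1" using t om by simp
      then have "0 \<le> M / sinh (\<omega> / 2) * (exp (\<omega> * t) - 1)"
        by (rule mult_nonneg_nonneg[OF cpos])
      then have "1 \<le> 1 + M / sinh (\<omega> / 2) * (exp (\<omega> * t) - 1)"
        by linarith
      then have "PS w \<le> PS w * (1 + M / sinh (\<omega> / 2) * (exp (\<omega> * t) - 1))"
        using PS_props(2)[OF w] by (simp add: mult_le_cancel_left1)
      then show ?thesis using PS_props(1)[OF w t] by linarith
    qed
    ultimately have "S t w \<in> D \<and> norm (A (S t w)) \<le> PS w * (1 + M / sinh (\<omega> / 2) * (exp (\<omega> * t) - 1))" by blast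
  } note base = this
  case 0 show ?case using base by simp
  case (Suc n)
  show ?case
  proof
    fix t assume t: "t \<in> {0..real (Suc n) + 1}"
    show "S t w \<in> D \<and> norm (A (S t w)) \<le> PS w * (1 + M / sinh (\<omega> / 2) * (exp (\<omega> * t) - 1))"
    proof (cases "t \<le> 1")
      case True then show ?thesis using base t by simp
    next
      case False
      have t1: "t - 1 \<in> {0..real n + 1}" using t False by auto
      have IH: "S (t - 1) w \<in> D" "norm (A (S (t - 1) w)) \<le> PS w * (1 + M / sinh (\<omega> / 2) * (exp (\<omega> * (t - 1)) - 1))"
        using Suc.IH t1 by auto
      have h: "S (1/2) w \<in> D" using w by (simp add: phase_space_def)
      have rec: "S t w = S (t - 1) w + 2 *\<^sub>R C (t - 1/2) (S (1/2) w)"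
        using S_rec[of "t - 1/2" "1/2" w] by (simp add: algebra_simps)
      have c1: "C (t - 1/2) (S (1/2) w) \<in> D \<and> A (C (t - 1/2) (S (1/2) w)) = C (t - 1/2) (A (S (1/2) w))"
        by (rule D_C[OF h])
      have c2: "2 *\<^sub>R C (t - 1/2) (S (1/2) w) \<in> D \<and> A (2 *\<^sub>R C (t - 1/2) (S (1/2) w)) = 2 *\<^sub>R C (t - 1/2) (A (S (1/2) w))"
        using D_scale[OF conjunct1[OF c1], of 2] c1 by simp
      have inD: "S t w \<in> D" and Aeq: "A (S t w) = A (S (t - 1) w) + 2 *\<^sub>R C (t - 1/2) (A (S (1/2) w))"
        using D_add[OF IH(1) conjunct1[OF c2]] c2 rec by auto
      have n2: "norm (2 *\<^sub>R C (t - 1/2) (A (S (1/2) w))) \<le> 2 * M * exp (\<omega> * (t - 1/2)) * PS w"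
      proof -
        have "norm (2 *\<^sub>R C (t - 1/2) (A (S (1/2) w))) = 2 * norm (C (t - 1/2) (A (S (1/2) w)))" by simp
        also have "\<dots> \<le> 2 * (M * exp (\<omega> * \<bar>t - 1/2\<bar>) * norm (A (S (1/2) w)))"
          using C_norm by (intro mult_left_mono) auto
        also have "\<dots> \<le> 2 * (M * exp (\<omega> * \<bar>t - 1/2\<bar>) * PS w)"
          using PS_props(1)[OF w, of "1/2"] M1 by (intro mult_left_mono) auto
        also have "\<dots> = 2 * M * exp (\<omega> * (t - 1/2)) * PS w" using False by simp
        finally show ?thesis .
      qed
      have gen: "\<And>P c a b :: real. P * (1 + c * (a - 1)) + b * P = P * (1 + (c * a + b) - c)"
        by (simp add: algebra_simps)
      have gen2: "\<And>P c e :: real. P * (1 + c * e - c) = P * (1 + c * (e - 1))"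
        by (simp add: algebra_simps)
      have "norm (A (S t w)) \<le> norm (A (S (t - 1) w)) + norm (2 *\<^sub>R C (t - 1/2) (A (S (1/2) w)))"
        unfolding Aeq by (rule norm_triangle_ineq)
      also have "\<dots> \<le> PS w * (1 + M / sinh (\<omega> / 2) * (exp (\<omega> * (t - 1)) - 1)) + 2 * M * exp (\<omega> * (t - 1/2)) * PS w"
        using IH(2) n2 by simp
      also have "\<dots> = PS w * (1 + (M / sinh (\<omega> / 2) * exp (\<omega> * (t - 1)) + 2 * M * exp (\<omega> * (t - 1/2))) - M / sinh (\<omega> / 2))"
        by (rule gen)
      also have "\<dots> = PS w * (1 + M / sinh (\<omega> / 2) * (exp (\<omega> * t) - 1))"
        unfolding sinh_id by (rule gen2)
      finally show ?thesis using inD by simp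
    qed
  qed
qed

lemma Sw:
  assumes w: "w \<in> phase_space C D A"
  shows "S t w \<in> D \<and> norm (A (S t w)) \<le> PS w * (1 + M / sinh (\<omega> / 2) * (exp (\<omega> * \<bar>t\<bar>) - 1))"
proof -
  obtain n :: nat where n: "\<bar>t\<bar> \<le> real n + 1" using reals_Archimedean2[of "\<bar>t\<bar>"] by (meson less_imp_le add_increasing2 zero_le_one order_trans le_add_same_cancel1 less_le_not_le) 
  have P: "S \<bar>t\<bar> w \<in> D \<and> norm (A (S \<bar>t\<bar> w)) \<le> PS w * (1 + M / sinh (\<omega> / 2) * (exp (\<omega> * \<bar>t\<bar>) - 1))"
    using Sw_pos[OF w, of n] n by auto
  show ?thesis
  proof (cases "0 \<le> t")
    case True then show ?thesis using P by simp
  next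
    case False
    have e: "S t w = (-1) *\<^sub>R S \<bar>t\<bar> w" using S_odd[of "- t" w] False by simp
    show ?thesis unfolding e using D_scale[OF conjunct1[OF P], of "-1"] P by simp
  qed
qed


lemma main:
  assumes w: "w \<in> phase_space C D A"
  shows "C t w + S t x \<in> phase_space C D A \<and>
           S t w \<in> D \<and>
           phase_norm C A (C t w + S t x) + norm (A (S t w) + C t x)
             \<le> M * max (2 + M / sinh (\<omega> / 2)) (1 + 1 / \<omega> + exp \<omega>) * exp (\<omega> * \<bar>t\<bar>)
               * (phase_norm C A w + norm x)"
proof -
  define y where "y = C t w + S t x"
  define E where "E = exp (\<omega> * \<bar>t\<bar>)"
  define P where "P = PS w"
  define c where "c = M / sinh (\<omega> / 2)"
  define m where "m = max (2 + M / sinh (\<omega> / 2)) (1 + 1 / \<omega> + exp \<omega>)"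
  have E1: "E \<ge> 1" using om by (simp add: E_def)
  have P0: "P \<ge> 0" using PS_props(2)[OF w] by (simp add: P_def)
  have c0: "c \<ge> 0" using M1 om by (simp add: c_def)
  have Sy: "S s y = C t (S s w) + S s (S t x)" for s
    by (simp add: y_def S_add SC)
  have ASy: "S s y \<in> D \<and> A (S s y) = C t (A (S s w)) + (1/2) *\<^sub>R (C (t + s) x - C (t - s) x)"
    if s: "s \<in> {0..1}" for s
  proof -
    have h: "S s w \<in> D" using w s by (simp add: phase_space_def)
    show ?thesis unfolding Sy using D_add[OF conjunct1[OF D_C[OF h]] conjunct1[OF SS_D]] D_C[OF h, of t] SS_D[of s t x]
      by simp
  qed
  have cAw: "continuous_on {0..1} (\<lambda>s. A (S s w))" using w by (simp add: phase_space_def)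
  have yP: "y \<in> phase_space C D A"
    unfolding phase_space_def
  proof (intro CollectI conjI ballI)
    show "S s y \<in> D" if "s \<in> {0..1}" for s using ASy[OF that] by blast
    show "continuous_on {0..1} (\<lambda>s. S s y)" by (rule S_cont)
    have "continuous_on {0..1} (\<lambda>s. C t (A (S s w)) + (1/2) *\<^sub>R (C (t + s) x - C (t - s) x))"
      by (intro continuous_intros bounded_linear.continuous_on[OF Cbl cAw])
    then show "continuous_on {0..1} (\<lambda>s. A (S s y))"
      by (rule continuous_on_cong[THEN iffD1, rotated 2]) (auto simp: ASy)
  qed
  have Stw: "S t w \<in> D" and nAStw: "norm (A (S t w)) \<le> P * (1 + c * (E - 1))"
    using Sw[OF w, of t] by (auto simp: P_def c_def E_def)
  have pw: "phase_norm C A w = norm w + P" by (simp add: phase_norm_def P_def PS_def)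
  have py: "phase_norm C A y = norm y + PS y" by (simp add: phase_norm_def PS_def)
  have ny: "norm y \<le> M * E * norm w + M / \<omega> * E * norm x"
    unfolding y_def using norm_triangle_ineq[of "C t w" "S t x"] C_norm[of t w] S_norm[of t x]
    by (simp add: E_def)
  have PSy: "PS y \<le> M * E * P + M * exp \<omega> * E * norm x"
    unfolding PS_def
  proof (rule cSUP_least)
    show "{0::real..1} \<noteq> {}" by simp
    fix s :: real assume s: "s \<in> {0..1}"
    have e: "exp (\<omega> * \<bar>t + s\<bar>) \<le> exp \<omega> * E" "exp (\<omega> * \<bar>t - s\<bar>) \<le> exp \<omega> * E"
    proof -
      have "\<bar>t + s\<bar> \<le> \<bar>t\<bar> + 1" "\<bar>t - s\<bar> \<le> \<bar>t\<bar> + 1" using s by auto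
      then have "\<omega> * \<bar>t + s\<bar> \<le> \<omega> * (\<bar>t\<bar> + 1)" "\<omega> * \<bar>t - s\<bar> \<le> \<omega> * (\<bar>t\<bar> + 1)"
        using om by (intro mult_left_mono; simp)+
      then have "\<omega> * \<bar>t + s\<bar> \<le> \<omega> + \<omega> * \<bar>t\<bar>" "\<omega> * \<bar>t - s\<bar> \<le> \<omega> + \<omega> * \<bar>t\<bar>"
        by (simp_all add: algebra_simps)
      then show "exp (\<omega> * \<bar>t + s\<bar>) \<le> exp \<omega> * E" "exp (\<omega> * \<bar>t - s\<bar>) \<le> exp \<omega> * E"
        by (simp_all add: E_def exp_add[symmetric])
    qed
    have "norm (A (S s y)) \<le> norm (C t (A (S s w))) + (1/2) * (norm (C (t + s) x) + norm (C (t - s) x))"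
      unfolding conjunct2[OF ASy[OF s]]
      by (rule order_trans[OF norm_triangle_ineq]) (simp add: norm_triangle_ineq4)
    also have "\<dots> \<le> M * E * P + (1/2) * (M * (exp \<omega> * E) * norm x + M * (exp \<omega> * E) * norm x)"
    proof (intro add_mono mult_left_mono)
      show "norm (C t (A (S s w))) \<le> M * E * P"
        using C_norm[of t "A (S s w)"] PS_props(1)[OF w s] M1 E1
        by (simp add: E_def P_def) (smt (verit) mult_left_mono mult_nonneg_nonneg exp_ge_zero)
      show "norm (C (t + s) x) \<le> M * (exp \<omega> * E) * norm x"
        using C_norm[of "t + s" x] e(1) M1 by (smt (verit) mult_left_mono mult_right_mono norm_ge_zero)
      show "norm (C (t - s) x) \<le> M * (exp \<omega> * E) * norm x"
        using C_norm[of "t - s" x] e(2) M1 by (smt (verit) mult_left_mono mult_right_mono norm_ge_zero)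
    qed simp
    also have "\<dots> = M * E * P + M * exp \<omega> * E * norm x" by (simp add: algebra_simps)
    finally show "norm (A (S s y)) \<le> M * E * P + M * exp \<omega> * E * norm x" .
  qed
  have n2: "norm (A (S t w) + C t x) \<le> P * (1 + c * (E - 1)) + M * E * norm x"
    using norm_triangle_ineq[of "A (S t w)" "C t x"] nAStw C_norm[of t x] by (simp add: E_def)
  have tot: "phase_norm C A y + norm (A (S t w) + C t x)
      \<le> (M * E * norm w + M * E * P + P + c * E * P) + M * E * (1 / \<omega> + exp \<omega> + 1) * norm x"
  proof -
    have "P * (1 + c * (E - 1)) \<le> P + c * E * P"
      using P0 c0 by (simp add: algebra_simps)
    then show ?thesis using py ny PSy n2 by (simp add: algebra_simps)
  qed
  have m1: "2 + c \<le> m" and m2: "1 / \<omega> + exp \<omega> + 1 \<le> m" by (auto simp: m_def c_def)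
  have ME: "M * E \<ge> 1" using M1 E1 by (metis less_one mult_le_cancel_right1 mult_mono' not_less order_trans zero_le_one)
  have A1: "M * E * norm w + M * E * P + P + c * E * P \<le> M * m * E * (norm w + P)"
  proof -
    have "M * m * E * (norm w + P) \<ge> M * (2 + c) * E * (norm w + P)"
      using m1 M1 E1 P0 by (intro mult_right_mono mult_left_mono) auto
    moreover have "P \<le> M * E * P" using ME P0 by (simp add: mult_le_cancel_right1)
    moreover have "c * E * P \<le> M * c * E * P"
    proof -
      have "0 \<le> c * E * P" using c0 E1 P0 by simp
      then have "1 * (c * E * P) \<le> M * (c * E * P)" by (rule mult_right_mono[OF M1])
      then show ?thesis by (simp add: mult.assoc)
    qed
    moreover have "0 \<le> M * E * norm w" "0 \<le> M * c * E * norm w" using M1 E1 c0 by auto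
    ultimately show ?thesis by (simp add: algebra_simps)
  qed
  have A2: "M * E * (1 / \<omega> + exp \<omega> + 1) * norm x \<le> M * m * E * norm x"
    using m2 M1 E1 by (intro mult_right_mono) (auto simp: mult.commute mult.left_commute)
  have "phase_norm C A y + norm (A (S t w) + C t x) \<le> M * m * E * (phase_norm C A w + norm x)"
    using tot A1 A2 pw by (simp add: algebra_simps)
  then show ?thesis using yP Stw by (simp add: y_def m_def E_def)
qed

end

theorem lemma2p3:
  fixes C :: "real \<Rightarrow> 'a::banach \<Rightarrow> 'a" and D :: "'a set" and A :: "'a \<Rightarrow> 'a"
    and M \<omega> :: real
  assumes "cosine_family C"
    and "cosine_generator C D A"
    and "M \<ge> 1" and "\<omega> > 0"
    and "\<forall>t. onorm (C t) \<le> M * exp (\<omega> * \<bar>t\<bar>)"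
  shows "\<forall>t w x. w \<in> phase_space C D A \<longrightarrow>
           C t w + sine_family C t x \<in> phase_space C D A \<and>
           sine_family C t w \<in> D \<and>
           phase_norm C A (C t w + sine_family C t x) + norm (A (sine_family C t w) + C t x)
             \<le> M * max (2 + M / sinh (\<omega> / 2)) (1 + 1 / \<omega> + exp \<omega>) * exp (\<omega> * \<bar>t\<bar>)
               * (phase_norm C A w + norm x)"
proof -
  interpret cf C D A M \<omega> using assms by unfold_locales
  show ?thesis using main by blast
qed

end
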